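(* Let $m\ge1$, $n=2m$, $1\le k\le n$. Let $g\in\mathbb{F}_{q^n}$ be a normal element over $\mathbb{F}_q$, $\bm{g}=(g^{q^{n-1}},\dots,g^{q},g)$, and $G=\mathcal{P}_k(\bm{g})$. Let $M\in GL_n(\mathbb{F}_{q^n})$ be a circulant matrix. Let $\varphi:\mathbb{F}_{q^n}\to\mathbb{F}_{q^n}$ be an $\mathbb{F}_{q^m}$-linear automorphism that is fully linear over $\mathbb{F}_{q^n}$ (with respect to the base field $\mathbb{F}_{q^m}$). Then $\varphi(M)$ is invertible and there exists $j\in\{0,1\}$ such that $\varphi(GM)\varphi(M)^{-1}=G^{(q^{mj})}$, where $G^{(q^{mj})}$ denotes the matrix obtained by raising every entry of $G$ to the power $q^{mj}$.
   Context: $q$ is a prime power (the paper takes $q$ a power of $2$). $g\in\mathbb{F}_{q^n}$ is normal over $\mathbb{F}_q$ if $g,g^q,\dots,g^{q^{n-1}}$ form an $\mathbb{F}_q$-basis of $\mathbb{F}_{q^n}$. For $\bm{v}=(v_0,\dots,v_{n-1})$, the circulant matrix $\mathcal{P}_n(\bm{v})$ is the $n\times n$ matrix whose first row is $\bm{v}$ and whose $(i+1)$-th row is the cyclic right shift of the $i$-th row, i.e. rows $(v_0,\dots,v_{n-1}),(v_{n-1},v_0,\dots,v_{n-2}),\dots,(v_1,\dots,v_{n-1},v_0)$; $\mathcal{P}_k(\bm{v})$ is the matrix of its first $k$ rows. $\varphi$ is applied entrywise to matrices. An $\mathbb{F}_{q^m}$-linear automorphism $\varphi$ of $\mathbb{F}_{q^n}$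 (a bijective $\mathbb{F}_{q^m}$-linear map) is fully linear over $\mathbb{F}_{q^n}$ if for every length $N$ and every $\mathbb{F}_{q^n}$-linear code $\mathcal{C}\subseteq\mathbb{F}_{q^n}^N$, the set $\varphi(\mathcal{C})=\{\varphi(\bm{c}):\bm{c}\in\mathcal{C}\}$ (componentwise application) is again $\mathbb{F}_{q^n}$-linear. *)

theory Defs
  imports "HOL-Computational_Algebra.Primes" "Jordan_Normal_Form.Matrix"
begin

text \<open>The subfield F_{q^e} of a finite field: elements fixed by x \<mapsto> x^(q^e).\<close>
definition subfield_elems :: "nat \<Rightarrow> 'a::field set" where
  "subfield_elems Q = {x. x ^ Q = x}"

definition prime_power :: "nat \<Rightarrow> bool" where
  "prime_power q \<longleftrightarrow> (\<exists>p r. prime p \<and> r \<ge> 1 \<and> q = p ^ r)"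

definition normal_element :: "nat \<Rightarrow> nat \<Rightarrow> 'a::field \<Rightarrow> bool" where
  "normal_element q n g \<longleftrightarrow>
     (\<forall>c. (\<forall>i<n. c i \<in> subfield_elems q) \<and> (\<Sum>i<n. c i * g ^ (q ^ i)) = 0
          \<longrightarrow> (\<forall>i<n. c i = 0)) \<and>
     (\<forall>x. \<exists>c. (\<forall>i<n. c i \<in> subfield_elems q) \<and> x = (\<Sum>i<n. c i * g ^ (q ^ i)))"

text \<open>P_k(v): first k rows of the n x n circulant matrix with first row v = (v 0, ..., v (n-1));
  row i is the i-fold cyclic right shift, so entry (i,j) is v ((j - i) mod n).\<close>
definition circ_rows :: "nat \<Rightarrow> nat \<Rightarrow> (nat \<Rightarrow> 'a) \<Rightarrow> 'a mat" where
  "circ_rows k n v = mat k n (\<lambda>(i, j). v (nat ((int j - int i) mod int n)))"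

definition is_circulant :: "nat \<Rightarrow> 'a mat \<Rightarrow> bool" where
  "is_circulant n M \<longleftrightarrow> (\<exists>v. M = circ_rows n n v)"

definition linear_code :: "nat \<Rightarrow> 'a::field list set \<Rightarrow> bool" where
  "linear_code N C \<longleftrightarrow> C \<subseteq> {v. length v = N} \<and> replicate N 0 \<in> C \<and>
     (\<forall>u\<in>C. \<forall>v\<in>C. map2 (+) u v \<in> C) \<and> (\<forall>a. \<forall>u\<in>C. map ((*) a) u \<in> C)"

definition fully_linear :: "('a::field \<Rightarrow> 'a) \<Rightarrow> bool" where
  "fully_linear \<phi> \<longleftrightarrow> (\<forall>N C. linear_code N C \<longrightarrow> linear_code N (map \<phi> ` C))"

definition subfield_linear_aut :: "nat \<Rightarrow> ('a::field \<Rightarrow> 'a) \<Rightarrow> bool" where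
  "subfield_linear_aut Q \<phi> \<longleftrightarrow> bij \<phi> \<and> (\<forall>x y. \<phi> (x + y) = \<phi> x + \<phi> y) \<and>
     (\<forall>c x. c \<in> subfield_elems Q \<longrightarrow> \<phi> (c * x) = c * \<phi> x)"

end

theory Submission imports Defs "HOL-Number_Theory.Residues" begin


lemma pow_card_same:
  fixes x :: "'a::{field,finite}"
  shows "x ^ card (UNIV :: 'a set) = x"
proof (cases "x = 0")
  case False
  have "x * (\<Prod>y\<in>UNIV-{0}. x * y) = x * x ^ (card (UNIV :: 'a set) - 1) * \<Prod>(UNIV-{0})"
    by (simp add: prod.distrib mult_ac)
  also have "x * x ^ (card (UNIV :: 'a set) - 1) = x ^ Suc (card (UNIV :: 'a set) - 1)"
    by (subst power_Suc) auto
  also have "Suc (card (UNIV :: 'a set) - 1) = card (UNIV :: 'a set)"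
    using finite_UNIV_card_ge_0[where ?'a = 'a] by simp
  also have "(\<Prod>y\<in>UNIV-{0}. x * y) = (\<Prod>y\<in>UNIV-{0}. y)"
    by (rule prod.reindex_bij_witness[of _ "\<lambda>y. y / x" "\<lambda>y. x * y"]) (use False in auto)
  finally show ?thesis
    by simp
qed (use finite_UNIV_card_ge_0[where ?'a = 'a] in auto)

lemma frob_facts:
  fixes dummy :: "'a::{field,finite}"
  assumes "prime_power q" and "card (UNIV :: 'a set) = q ^ n" and "n = 2 * m"
  shows "\<forall>x y::'a. (x + y) ^ (q^m) = x ^ (q^m) + y ^ (q^m)"
    and "\<forall>x::'a. (x ^ (q^m)) ^ (q^m) = x"
proof -
  obtain p r where p: "prime p" "r \<ge> 1" "q = p ^ r" using assms(1) unfolding prime_power_def by blast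
  have fin: "finite (UNIV :: 'a set)" by simp
  have cp: "CHAR('a) > 0" using finite_imp_CHAR_pos[OF fin] .
  have pc: "prime CHAR('a)" using prime_CHAR_semidom[OF cp] .
  have "CHAR('a) dvd p ^ (r * n)" using CHAR_dvd_CARD[where ?'a='a] assms(2) p(3)
    by (simp add: power_mult)
  hence "CHAR('a) dvd p" using pc prime_dvd_power by blast
  hence cpe: "CHAR('a) = p" using pc p(1) by (metis primes_dvd_imp_eq)
  have "q ^ m = CHAR('a) ^ (r * m)" using cpe p(3) by (simp add: power_mult)
  thus "\<forall>x y::'a. (x + y) ^ (q^m) = x ^ (q^m) + y ^ (q^m)"
    using freshmans_dream' pc by blast
  show "\<forall>x::'a. (x ^ (q^m)) ^ (q^m) = x"
  proof
    fix x :: 'a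
    have "(x ^ (q^m)) ^ (q^m) = x ^ (q ^ n)" using assms(3)
      by (simp flip: power_mult add: power_add mult_2 )
    thus "(x ^ (q^m)) ^ (q^m) = x" using pow_card_same[of x] assms(2) by simp
  qed
qed



lemma psi_pointwise:
  fixes \<psi> :: "'a::field \<Rightarrow> 'a"
  assumes fa: "\<forall>x y::'a. (x + y) ^ Q = x ^ Q + y ^ Q"
    and fi: "\<forall>x::'a. (x ^ Q) ^ Q = x"
    and pa: "\<forall>x y. \<psi> (x + y) = \<psi> x + \<psi> y"
    and pm: "\<forall>x y. \<psi> (x * y) = \<psi> x * \<psi> y"
    and pK: "\<forall>c. c ^ Q = c \<longrightarrow> \<psi> c = c"
  shows "\<psi> x = x \<or> \<psi> x = x ^ Q"
proof -
  have pp: "\<psi> (z ^ k) = \<psi> z ^ k" if "\<psi> 1 = 1" for z k using that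
    by (induction k) (auto simp: pm)
  have p1: "\<psi> 1 = 1" using pK by simp
  define s where "s = x + x ^ Q"
  define t where "t = x * x ^ Q"
  define y where "y = \<psi> x"
  have "s ^ Q = s" unfolding s_def using fa fi by (simp add: add.commute)
  hence "\<psi> s = s" using pK by blast
  hence s': "y + y ^ Q = s" unfolding s_def y_def using pa pp[OF p1] by simp
  have "t ^ Q = t" unfolding t_def using fi by (simp add: power_mult_distrib mult.commute)
  hence "\<psi> t = t" using pK by blast
  hence t': "y * y ^ Q = t" unfolding t_def y_def using pm pp[OF p1] by simp
  have "(y - x) * (y - x ^ Q) = y*y - s * y + t" unfolding s_def t_def by (simp add: algebra_simps)
  also have "\<dots> = 0" using s'[symmetric] t'[symmetric] by (simp add: algebra_simps)
  finally show ?thesis unfolding y_def by simp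
qed

lemma psi_classify:
  fixes \<psi> :: "'a::field \<Rightarrow> 'a"
  assumes fa: "\<forall>x y::'a. (x + y) ^ Q = x ^ Q + y ^ Q"
    and fi: "\<forall>x::'a. (x ^ Q) ^ Q = x"
    and pa: "\<forall>x y. \<psi> (x + y) = \<psi> x + \<psi> y"
    and pm: "\<forall>x y. \<psi> (x * y) = \<psi> x * \<psi> y"
    and pK: "\<forall>c. c ^ Q = c \<longrightarrow> \<psi> c = c"
  shows "(\<forall>x. \<psi> x = x) \<or> (\<forall>x. \<psi> x = x ^ Q)"
proof (rule ccontr)
  note P = psi_pointwise[OF fa fi pa pm pK]
  assume "\<not> ?thesis"
  then obtain a b where a: "\<psi> a \<noteq> a" and b: "\<psi> b \<noteq> b ^ Q" by blast
  have a': "\<psi> a = a ^ Q" using P a by blast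
  have b': "\<psi> b = b" using P b by blast
  have ab: "\<psi> (a + b) = a ^ Q + b" using pa a' b' by simp
  show False
  proof (cases "\<psi> (a + b) = a + b")
    case True
    then show ?thesis using ab a a' by simp
  next
    case False
    then have "\<psi> (a + b) = a ^ Q + b ^ Q" using P fa by metis
    then show ?thesis using ab b b' by simp
  qed
qed



lemma fully_linear_mult:
  fixes \<phi> :: "'a::field \<Rightarrow> 'a"
  assumes aut: "subfield_linear_aut Q \<phi>" and fl: "fully_linear \<phi>"
  shows "\<phi> 1 \<noteq> 0" and "\<phi> (a * x) = \<phi> a / \<phi> 1 * \<phi> x"
proof -
  have bij: "bij \<phi>" and add: "\<forall>x y. \<phi> (x + y) = \<phi> x + \<phi> y"
    using aut unfolding subfield_linear_aut_def by auto
  have inj: "inj \<phi>" using bij bij_is_inj by blast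
  have z: "\<phi> 0 = 0" using add by (metis add_cancel_right_right add_0)
  show c: "\<phi> 1 \<noteq> 0" using inj z by (metis injD one_neq_zero)
  define C where "C = range (\<lambda>a. [a, a * x])"
  have c1: "C \<subseteq> {v. length v = 2}" unfolding C_def by auto
  have c2: "replicate 2 0 \<in> C" unfolding C_def
    by (rule range_eqI[of _ _ 0]) (simp add: numeral_2_eq_2)
  have c3: "map2 (+) u v \<in> C" if uv: "u \<in> C" "v \<in> C" for u v
  proof -
    obtain a where ua: "u = [a, a*x]" using uv(1) unfolding C_def by (rule rangeE)
    obtain b where vb: "v = [b, b*x]" using uv(2) unfolding C_def by (rule rangeE)
    from ua vb show ?thesis unfolding C_def
      by (intro range_eqI[of _ _ "a+b"]) (simp add: algebra_simps)
  qed
  have c4: "map ((*) d) u \<in> C" if u: "u \<in> C" for u d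
  proof -
    obtain a where ua: "u = [a, a*x]" using u unfolding C_def by (rule rangeE)
    from ua show ?thesis unfolding C_def
      by (intro range_eqI[of _ _ "d*a"]) (simp add: algebra_simps)
  qed
  have "linear_code 2 C" unfolding linear_code_def
    by (intro conjI c1 c2 ballI allI; (rule c3 c4; assumption))
  hence lc: "linear_code 2 (map \<phi> ` C)" using fl unfolding fully_linear_def by blast
  have m1: "[\<phi> 1, \<phi> x] \<in> map \<phi> ` C" unfolding C_def
    by (rule image_eqI[of _ _ "[1, x]"], simp, rule range_eqI[of _ _ 1], simp)
  have sc: "\<forall>d. \<forall>u\<in>map \<phi> ` C. map ((*) d) u \<in> map \<phi> ` C"
    using lc[unfolded linear_code_def] by (elim conjE) assumption
  have "map ((*) (\<phi> a / \<phi> 1)) [\<phi> 1, \<phi> x] \<in> map \<phi> ` C"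
    by (rule bspec[OF spec[OF sc] m1])
  then obtain w where w1: "map ((*) (\<phi> a / \<phi> 1)) [\<phi> 1, \<phi> x] = map \<phi> w" and w2: "w \<in> C"
    by (rule imageE)
  from w2 obtain a' where w3: "w = [a', a' * x]" unfolding C_def by (rule rangeE)
  from w1 w3 have e1: "\<phi> a / \<phi> 1 * \<phi> 1 = \<phi> a'" and e2: "\<phi> a / \<phi> 1 * \<phi> x = \<phi> (a' * x)"
    by simp_all
  from e1 c have "\<phi> a' = \<phi> a" by simp
  hence "a' = a" by (rule injD[OF inj])
  thus "\<phi> (a * x) = \<phi> a / \<phi> 1 * \<phi> x" using e2 by simp
qed

lemma smult_mult_smult:
  assumes "A \<in> carrier_mat n1 n2" "B \<in> carrier_mat n2 n3"
  shows "(a \<cdot>\<^sub>m A) * (b \<cdot>\<^sub>m B) = (a * b :: 'a::field) \<cdot>\<^sub>m (A * B)"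
proof -
  have "(a \<cdot>\<^sub>m A) * (b \<cdot>\<^sub>m B) = a \<cdot>\<^sub>m (A * (b \<cdot>\<^sub>m B))"
    by (rule mult_smult_assoc_mat[OF assms(1) smult_carrier_mat[OF assms(2)]])
  also have "\<dots> = a \<cdot>\<^sub>m (b \<cdot>\<^sub>m (A * B))"
    using assms by (simp add: mult_smult_distrib)
  also have "\<dots> = (a * b) \<cdot>\<^sub>m (A * B)"
    by (intro eq_matI) (simp_all add: mult.assoc)
  finally show ?thesis .
qed


lemma smult_one_mat: "(1::'a::semiring_1) \<cdot>\<^sub>m A = A"
  by (intro eq_matI) simp_all

theorem mainTheorem7:
  fixes q m n k :: nat and g :: "'a::{field,finite}" and M :: "'a mat"
    and \<phi> :: "'a \<Rightarrow> 'a"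
  assumes "prime_power q" and "card (UNIV :: 'a set) = q ^ n"
    and "m \<ge> 1" and "n = 2 * m" and "1 \<le> k" and "k \<le> n"
    and "normal_element q n g"
    and "M \<in> carrier_mat n n" and "invertible_mat M" and "is_circulant n M"
    and "subfield_linear_aut (q ^ m) \<phi>" and "fully_linear \<phi>"
  shows "invertible_mat (map_mat \<phi> M) \<and>
    (\<exists>j\<in>{0::nat, 1}. \<exists>Minv. inverts_mat (map_mat \<phi> M) Minv \<and> inverts_mat Minv (map_mat \<phi> M) \<and>
       map_mat \<phi> (circ_rows k n (\<lambda>t. g ^ (q ^ (n - 1 - t))) * M) * Minv =
       map_mat (\<lambda>x. x ^ (q ^ (m * j))) (circ_rows k n (\<lambda>t. g ^ (q ^ (n - 1 - t)))))"
proof -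
  note aut = assms(11) and fl = assms(12)
  define c where "c = \<phi> 1"
  have c0: "c \<noteq> 0" unfolding c_def by (rule fully_linear_mult(1)[OF aut fl])
  have add: "\<forall>x y. \<phi> (x + y) = \<phi> x + \<phi> y" and hom: "\<forall>c x. c \<in> subfield_elems (q^m) \<longrightarrow> \<phi> (c * x) = c * \<phi> x"
    using aut unfolding subfield_linear_aut_def by auto
  define \<psi> where "\<psi> = (\<lambda>x. \<phi> x / c)"
  have padd: "\<forall>x y. \<psi> (x + y) = \<psi> x + \<psi> y" unfolding \<psi>_def using add by (simp add: add_divide_distrib)
  have pmul: "\<forall>x y. \<psi> (x * y) = \<psi> x * \<psi> y" unfolding \<psi>_def c_def
    using fully_linear_mult(2)[OF aut fl] by simp
  have pK: "\<forall>d. d ^ (q^m) = d \<longrightarrow> \<psi> d = d"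
  proof (intro allI impI)
    fix d :: 'a assume "d ^ (q^m) = d"
    hence "\<phi> (d * 1) = d * c" using hom unfolding c_def subfield_elems_def by blast
    thus "\<psi> d = d" unfolding \<psi>_def using c0 by simp
  qed
  note ff = frob_facts[OF assms(1,2,4)]
  have cl: "(\<forall>x. \<psi> x = x) \<or> (\<forall>x. \<psi> x = x ^ (q^m))"
    by (rule psi_classify[OF ff padd pmul pK])
  obtain j where j: "j \<in> {0::nat, 1}" and pj: "\<forall>x. \<psi> x = x ^ (q ^ (m * j))"
  proof (cases "\<forall>x. \<psi> x = x")
    case True
    show ?thesis by (rule that[of 0]) (use True in simp_all)
  next
    case False
    hence "\<forall>x. \<psi> x = x ^ (q^m)" using cl by blast
    show ?thesis by (rule that[of 1]) (use \<open>\<forall>x. \<psi> x = x ^ (q^m)\<close> in simp_all)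
  qed
  have phi: "\<And>x. \<phi> x = c * \<psi> x" unfolding \<psi>_def using c0 by simp
  have p0: "\<psi> 0 = 0" using padd[rule_format, of 0 0] by (metis add.right_neutral add_left_cancel)
  have p1: "\<psi> 1 = 1" using pK by simp
  interpret h: semiring_hom \<psi>
    by unfold_locales (use padd pmul p0 p1 in \<open>auto\<close>)
  have mphi: "map_mat \<phi> A = c \<cdot>\<^sub>m map_mat \<psi> A" for A
    by (rule eq_matI) (simp_all add: phi)
  obtain M' where i1: "inverts_mat M M'" and i2: "inverts_mat M' M"
    using assms(9) unfolding invertible_mat_def by blast
  have Mc: "M \<in> carrier_mat n n" by (rule assms(8))
  have MM': "M * M' = 1\<^sub>m n" using i1 Mc unfolding inverts_mat_def by simp
  have M'M: "M' * M = 1\<^sub>m (dim_row M')" using i2 unfolding inverts_mat_def by simp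
  have "dim_col M' = n" using arg_cong[OF MM', of dim_col] by simp
  moreover have "dim_row M' = n" using arg_cong[OF M'M, of dim_col] Mc by simp
  ultimately have M'c: "M' \<in> carrier_mat n n" by auto
  define G where "G = circ_rows k n (\<lambda>t. g ^ (q ^ (n - 1 - t)))"
  have Gc: "G \<in> carrier_mat k n" unfolding G_def circ_rows_def by simp
  define Minv where "Minv = inverse c \<cdot>\<^sub>m map_mat \<psi> M'"
  have PM: "map_mat \<psi> M \<in> carrier_mat n n" "map_mat \<psi> M' \<in> carrier_mat n n"
    using Mc M'c by auto
  have PP': "map_mat \<psi> M * map_mat \<psi> M' = 1\<^sub>m n"
    using h.mat_hom_mult[OF Mc M'c] MM' h.mat_hom_one by simp
  have P'P: "map_mat \<psi> M' * map_mat \<psi> M = 1\<^sub>m n"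
    using h.mat_hom_mult[OF M'c Mc] M'M \<open>dim_row M' = n\<close> h.mat_hom_one by simp
  have inv1: "inverts_mat (map_mat \<phi> M) Minv"
    unfolding inverts_mat_def Minv_def mphi
    using smult_mult_smult[OF PM] PP' c0 Mc by (simp add: smult_one_mat)
  have inv2: "inverts_mat Minv (map_mat \<phi> M)"
    unfolding inverts_mat_def Minv_def mphi
    using smult_mult_smult[OF PM(2) PM(1)] P'P c0 M'c by (simp add: smult_one_mat)
  have e1: "map_mat \<phi> (G * M) * Minv = map_mat \<psi> G"
  proof -
    have GMc: "G * M \<in> carrier_mat k n" using Gc Mc by simp
    have "map_mat \<phi> (G * M) * Minv = (c * inverse c) \<cdot>\<^sub>m (map_mat \<psi> (G * M) * map_mat \<psi> M')"
      unfolding Minv_def mphi by (rule smult_mult_smult) (use GMc M'c in auto)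
    also have "\<dots> = map_mat \<psi> G * (map_mat \<psi> M * map_mat \<psi> M')"
      using c0 h.mat_hom_mult[OF Gc Mc] Gc PM by (simp add: smult_one_mat assoc_mult_mat[of _ k n _ n _ n])
    also have "\<dots> = map_mat \<psi> G" using PP' Gc by simp
    finally show ?thesis .
  qed
  have e2: "map_mat \<psi> G = map_mat (\<lambda>x. x ^ (q ^ (m * j))) G"
    using pj by (intro eq_matI) simp_all
  have iv: "invertible_mat (map_mat \<phi> M)"
    unfolding invertible_mat_def using inv1 inv2 Mc by (auto simp: square_mat.simps)
  have e3: "map_mat \<phi> (G * M) * Minv = map_mat (\<lambda>x. x ^ (q ^ (m * j))) G"
    using e1 e2 by simp
  show ?thesis
    by (intro conjI iv bexI[OF _ j] exI[of _ Minv] inv1 inv2 e3[unfolded G_def])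
qed

end
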